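(* Let $L$ be a factorial R-lattice of type I admitting a regular equivalence relation $\sim$, and let $\{l_i\}$ be a family of mutually orthogonal minimal elements of $L$ which is maximal with respect to these two properties. Then $\bigvee_i l_i=1$.
   Context: Orthocomplemented lattice (paper's convention): a set $L$ with a partial order $\le$ in which every subset has a supremum and an infimum ($l\vee l'$, $l\wedge l'$ denote binary sup/inf, $0=\inf L$, $1=\sup L$), such that: (continuity) for every increasing net $(l_i)$ and every $l$, $\bigvee_i(l\wedge l_i)=l\wedge\bigvee_i l_i$, and for every decreasing net $(l_i)$ and every $l$, $\bigwedge_i(l\vee l_i)=l\vee\bigwedge_i l_i$; (modularity) $l\le l''$ implies $(l\vee l')\wedge l''=l\vee(l'\wedge l'')$ for all $l'$; together with a map $l\mapsto l^\perp$, also written $1-l$, satisfying $l^{\perp\perp}=l$, $l\vee l^\perp=1$, $l\wedge l^\perp=0$, and $l\le l'\Rightarrow l'^\perp\le l^\perp$. For $l'\le l$ put $l-l'=(1-l')\wedge l$. Write $\perp(l)=\{l'\in L: l'\le 1-l\}$; elements of $\perp(l)$ are orthogonal to $l$; a family is mutually orthogonal if any two distinct members are orthogonal. $l$ commutes with $l'$ if $l=(l\wedge l')\vee(l\wedge l'^\perp)$; $c(l)$ is the set of elements commuting with $l$; $C(L)=\bigcap_{l\in L}c(l)$. $L$ is factorial if $C(L)=\{0,1\}$ and abelian if $C(L)=L$. For $l\in L$, $L\wedge l=\{l'\in L:l'\le l\}$ is an orthocomplemented lattice with complement $l'\mapsto l-l'$; $l$ is an abelian element if $L\wedge l$ is abelian.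 A factorial lattice is of type I if it has at least one nonzero abelian element. $L$ is an R-lattice if $C(L\wedge l)=\{c\wedge l: c\in C(L)\}$ for every $l\in L$. An element $l\ne 0$ is minimal if for every $l'\in L$ either $l\wedge l'=0$ or $l\wedge l'=l$; $Min(L)$ is the set of minimal elements and $Min(l)=\{m\in Min(L): m\le l\}$. Regular equivalence relation: for an equivalence relation $\sim$ on $L$ write $l\le_\sim l'$ if there is $l''\le l'$ with $l\sim l''$. $\sim$ is regular if: (1) $l\sim 0\iff l=0$; (2) $l\ge l'$ and $l\le_\sim l'$ imply $l\sim l'$; (3) for all $l,l'$, $l\le_\sim l'$ or $l'\le_\sim l$; (4) if $(l_i)$, $(l_i')$ are families of mutually orthogonal elements with $l_i\sim l_i'$ for all $i$, then $\bigvee_i l_i\sim\bigvee_i l_i'$; (5) $l'\le l$ and $l'\sim l$ imply $l'=l$. *)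

theory Defs
  imports Main
begin

unbundle lattice_syntax

text \<open>The lattice L is the carrier type 'a (a complete lattice); the orthocomplement
  l \<mapsto> 1 - l is the function oc.\<close>

definition directed_up :: "'a::complete_lattice set \<Rightarrow> bool" where
  "directed_up D \<longleftrightarrow> (\<forall>a\<in>D. \<forall>b\<in>D. \<exists>c\<in>D. a \<le> c \<and> b \<le> c)"

definition directed_down :: "'a::complete_lattice set \<Rightarrow> bool" where
  "directed_down D \<longleftrightarrow> (\<forall>a\<in>D. \<forall>b\<in>D. \<exists>c\<in>D. c \<le> a \<and> c \<le> b)"

definition ortho_lattice :: "('a::complete_lattice \<Rightarrow> 'a) \<Rightarrow> bool" where
  "ortho_lattice oc \<longleftrightarrow>
     (\<forall>(D::'a set) l. directed_up D \<longrightarrow> (SUP d\<in>D. l \<sqinter> d) = l \<sqinter> Sup D) \<and>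
     (\<forall>(D::'a set) l. directed_down D \<longrightarrow> (INF d\<in>D. l \<squnion> d) = l \<squnion> Inf D) \<and>
     (\<forall>(l::'a) l' l''. l \<le> l'' \<longrightarrow> (l \<squnion> l') \<sqinter> l'' = l \<squnion> (l' \<sqinter> l'')) \<and>
     (\<forall>l. oc (oc l) = l) \<and>
     (\<forall>l. l \<squnion> oc l = top) \<and>
     (\<forall>l. l \<sqinter> oc l = bot) \<and>
     (\<forall>l l'. l \<le> l' \<longrightarrow> oc l' \<le> oc l)"

definition orth :: "('a::complete_lattice \<Rightarrow> 'a) \<Rightarrow> 'a \<Rightarrow> 'a \<Rightarrow> bool" where
  "orth oc l l' \<longleftrightarrow> l \<le> oc l'"

definition mutually_orth :: "('a::complete_lattice \<Rightarrow> 'a) \<Rightarrow> 'a set \<Rightarrow> bool" where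
  "mutually_orth oc M \<longleftrightarrow> (\<forall>x\<in>M. \<forall>y\<in>M. x \<noteq> y \<longrightarrow> orth oc x y)"

text \<open>Centre of the lattice L \<and> l (with complement b \<mapsto> l - b = (1 - b) \<sqinter> l):
  the elements a \<le> l with a = (a \<sqinter> b) \<squnion> (a \<sqinter> (l - b)) for every b \<le> l.\<close>
definition center_in :: "('a::complete_lattice \<Rightarrow> 'a) \<Rightarrow> 'a \<Rightarrow> 'a set" where
  "center_in oc l = {a. a \<le> l \<and> (\<forall>b. b \<le> l \<longrightarrow> a = (a \<sqinter> b) \<squnion> (a \<sqinter> (oc b \<sqinter> l)))}"

definition center :: "('a::complete_lattice \<Rightarrow> 'a) \<Rightarrow> 'a set" where
  "center oc = {a. \<forall>b. a = (a \<sqinter> b) \<squnion> (a \<sqinter> oc b)}"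

definition factorial :: "('a::complete_lattice \<Rightarrow> 'a) \<Rightarrow> bool" where
  "factorial oc \<longleftrightarrow> center oc = {bot, top}"

definition abelian_elem :: "('a::complete_lattice \<Rightarrow> 'a) \<Rightarrow> 'a \<Rightarrow> bool" where
  "abelian_elem oc l \<longleftrightarrow> center_in oc l = {a. a \<le> l}"

definition type_I :: "('a::complete_lattice \<Rightarrow> 'a) \<Rightarrow> bool" where
  "type_I oc \<longleftrightarrow> factorial oc \<and> (\<exists>l. l \<noteq> bot \<and> abelian_elem oc l)"

definition R_lattice :: "('a::complete_lattice \<Rightarrow> 'a) \<Rightarrow> bool" where
  "R_lattice oc \<longleftrightarrow> (\<forall>l. center_in oc l = {c \<sqinter> l | c. c \<in> center oc})"

definition minimal :: "'a::complete_lattice \<Rightarrow> bool" where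
  "minimal l \<longleftrightarrow> l \<noteq> bot \<and> (\<forall>l'. l \<sqinter> l' = bot \<or> l \<sqinter> l' = l)"

definition le_sim :: "('a::complete_lattice \<Rightarrow> 'a \<Rightarrow> bool) \<Rightarrow> 'a \<Rightarrow> 'a \<Rightarrow> bool" where
  "le_sim r l l' \<longleftrightarrow> (\<exists>l''. l'' \<le> l' \<and> r l l'')"

text \<open>Families in (4) are indexed by a set I of
  elements of 'a (any family of mutually orthogonal elements reduces to this, since
  its nonzero members are pairwise distinct).\<close>
definition regular_equiv :: "('a::complete_lattice \<Rightarrow> 'a) \<Rightarrow> ('a \<Rightarrow> 'a \<Rightarrow> bool) \<Rightarrow> bool" where
  "regular_equiv oc r \<longleftrightarrow> equivp r \<and>
     (\<forall>l. r l bot \<longleftrightarrow> l = bot) \<and>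
     (\<forall>l l'. l' \<le> l \<and> le_sim r l l' \<longrightarrow> r l l') \<and>
     (\<forall>l l'. le_sim r l l' \<or> le_sim r l' l) \<and>
     (\<forall>(I::'a set) f g.
        (\<forall>i\<in>I. \<forall>j\<in>I. i \<noteq> j \<longrightarrow> orth oc (f i) (f j) \<and> orth oc (g i) (g j)) \<and>
        (\<forall>i\<in>I. r (f i) (g i)) \<longrightarrow> r (SUP i\<in>I. f i) (SUP i\<in>I. g i)) \<and>
     (\<forall>l l'. l' \<le> l \<and> r l' l \<longrightarrow> l' = l)"

end

theory Submission
  imports Defs
begin

lemma sim_minimal:
  assumes reg: "regular_equiv oc r" and m: "minimal m" and rml: "r m l"
  shows "minimal l"
proof -
  have eq: "equivp r" using reg[unfolded regular_equiv_def, THEN conjunct1] .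
  have z: "\<forall>l. r l bot \<longleftrightarrow> l = bot" using reg[unfolded regular_equiv_def, THEN conjunct2, THEN conjunct1] .
  have tot: "\<forall>l l'. le_sim r l l' \<or> le_sim r l' l" using reg[unfolded regular_equiv_def, THEN conjunct2, THEN conjunct2, THEN conjunct2, THEN conjunct1] .
  have five: "\<forall>l l'. l' \<le> l \<and> r l' l \<longrightarrow> l' = l" using reg[unfolded regular_equiv_def, THEN conjunct2, THEN conjunct2, THEN conjunct2, THEN conjunct2, THEN conjunct2] .
  have sym: "\<And>a b. r a b \<Longrightarrow> r b a" using eq by (meson equivp_symp)
  have tr: "\<And>a b c. r a b \<Longrightarrow> r b c \<Longrightarrow> r a c" using eq by (meson equivp_transp)
  have mnz: "m \<noteq> bot" and mm: "\<And>y. m \<sqinter> y = bot \<or> m \<sqinter> y = m" using m unfolding minimal_def by auto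
  have lnz: "l \<noteq> bot" using rml z mnz by auto
  have "l \<sqinter> l' = bot \<or> l \<sqinter> l' = l" for l'
  proof -
    define x where "x = l \<sqinter> l'"
    have xl: "x \<le> l" unfolding x_def by simp
    from tot have "le_sim r m x \<or> le_sim r x m" by blast
    then have "x = bot \<or> x = l"
    proof
      assume "le_sim r m x"
      then obtain y where y: "y \<le> x" "r m y" unfolding le_sim_def by blast
      have "r y l" using y(2) rml sym tr by blast
      then have "y = l" using five y(1) xl by (meson order_trans)
      then show ?thesis using y(1) xl by auto
    next
      assume "le_sim r x m"
      then obtain y where y: "y \<le> m" "r x y" unfolding le_sim_def by blast
      have "m \<sqinter> y = y" using y(1) by (simp add: inf_absorb2)
      then have "y = bot \<or> y = m" using mm[of y] by auto
      then show ?thesis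
      proof
        assume "y = bot" then show ?thesis using y(2) z by auto
      next
        assume "y = m" then have "r x l" using y(2) rml tr by blast
        then show ?thesis using five xl by blast
      qed
    qed
    then show ?thesis unfolding x_def .
  qed
  then show ?thesis using lnz unfolding minimal_def by blast
qed

theorem mainTheorem7:
  fixes oc :: "'a::complete_lattice \<Rightarrow> 'a" and M :: "'a set"
  assumes "ortho_lattice oc"
    and "factorial oc" and "R_lattice oc" and "type_I oc"
    and "\<exists>r. regular_equiv oc r"
    and "\<forall>m\<in>M. minimal m"
    and "mutually_orth oc M"
    and "\<forall>M'. M \<subseteq> M' \<and> (\<forall>m\<in>M'. minimal m) \<and> mutually_orth oc M' \<longrightarrow> M' = M"
  shows "Sup M = top"
proof (rule ccontr)
  assume ne: "Sup M \<noteq> top"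
  obtain r where reg: "regular_equiv oc r" using assms(5) by blast
  have eq: "equivp r" using reg[unfolded regular_equiv_def, THEN conjunct1] .
  have z: "\<forall>l. r l bot \<longleftrightarrow> l = bot" using reg[unfolded regular_equiv_def, THEN conjunct2, THEN conjunct1] .
  have tot: "\<forall>l l'. le_sim r l l' \<or> le_sim r l' l" using reg[unfolded regular_equiv_def, THEN conjunct2, THEN conjunct2, THEN conjunct2, THEN conjunct1] .
  have ol1: "\<forall>l. oc (oc l) = l" using assms(1)[unfolded ortho_lattice_def, THEN conjunct2, THEN conjunct2, THEN conjunct2, THEN conjunct1] .
  have ol2: "\<forall>l. l \<squnion> oc l = top" using assms(1)[unfolded ortho_lattice_def, THEN conjunct2, THEN conjunct2, THEN conjunct2, THEN conjunct2, THEN conjunct1] .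
  have ol3: "\<forall>l. l \<sqinter> oc l = bot" using assms(1)[unfolded ortho_lattice_def, THEN conjunct2, THEN conjunct2, THEN conjunct2, THEN conjunct2, THEN conjunct2, THEN conjunct1] .
  have ol4: "\<forall>l l'. l \<le> l' \<longrightarrow> oc l' \<le> oc l" using assms(1)[unfolded ortho_lattice_def, THEN conjunct2, THEN conjunct2, THEN conjunct2, THEN conjunct2, THEN conjunct2, THEN conjunct2] .
  note ol = ol1 ol2 ol3 ol4
  obtain a where a: "a \<noteq> bot" "abelian_elem oc a" using assms(4) unfolding type_I_def by blast
  have ma: "minimal a"
  proof -
    have "a \<sqinter> l' = bot \<or> a \<sqinter> l' = a" for l'
    proof -
      have "a \<sqinter> l' \<in> center_in oc a" using a(2) unfolding abelian_elem_def by auto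
      then obtain c where "c \<in> center oc" "a \<sqinter> l' = c \<sqinter> a"
        using assms(3) unfolding R_lattice_def by blast
      moreover have "c = bot \<or> c = top" using calculation(1) assms(2) unfolding factorial_def by auto
      ultimately show ?thesis by auto
    qed
    then show ?thesis using a(1) unfolding minimal_def by blast
  qed
  define s where "s = Sup M"
  have ns: "oc s \<noteq> bot"
  proof
    assume "oc s = bot" then have "s = top" using ol(2) by (metis sup_bot_right)
    then show False using ne s_def by simp
  qed
  have "\<exists>m. minimal m \<and> m \<le> oc s"
  proof -
    from tot have "le_sim r a (oc s) \<or> le_sim r (oc s) a" by blast
    then show ?thesis
    proof
      assume "le_sim r a (oc s)"
      then obtain y where "y \<le> oc s" "r a y" unfolding le_sim_def by blast
      then show ?thesis using sim_minimal[OF reg ma] by blast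
    next
      assume "le_sim r (oc s) a"
      then obtain y where y: "y \<le> a" "r (oc s) y" unfolding le_sim_def by blast
      have "a \<sqinter> y = y" using y(1) by (simp add: inf_absorb2)
      then have "y = bot \<or> y = a" using ma unfolding minimal_def by metis
      then have "y = a" using y(2) z ns by auto
      then have "r a (oc s)" using y(2) eq by (meson equivp_symp)
      then show ?thesis using sim_minimal[OF reg ma] by blast
    qed
  qed
  then obtain m where m: "minimal m" "m \<le> oc s" by blast
  have orthm: "orth oc x m \<and> orth oc m x" if "x \<in> M" for x
  proof
    have xs: "x \<le> s" using that s_def by (simp add: Sup_upper)
    then have "oc s \<le> oc x" using ol(4) by blast
    then show "orth oc m x" using m(2) unfolding orth_def by simp
    have "oc (oc s) \<le> oc m" using ol(4) m(2) by blast
    then show "orth oc x m" using xs ol(1) unfolding orth_def by (metis order_trans)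
  qed
  have mnot: "m \<notin> M"
  proof
    assume "m \<in> M"
    then have "m \<le> s" using s_def by (simp add: Sup_upper)
    then have "m \<le> s \<sqinter> oc s" using m(2) by simp
    then show False using ol(3) m(1) unfolding minimal_def by (metis bot_unique)
  qed
  have "mutually_orth oc (insert m M)"
    using assms(7) orthm unfolding mutually_orth_def by auto
  moreover have "\<forall>x\<in>insert m M. minimal x" using assms(6) m(1) by auto
  ultimately have "insert m M = M"
    using assms(8) by blast
  then show False using mnot by blast
qed

end
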